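(* Let $\mathscr{A}$ be a $C^*$-algebra with identity such that the set $\mathscr{A}'_m$ of all linear multiplicative functionals $\varphi\colon\mathscr{A}\to\mathbb{C}$ is total (i.e., if $\varphi(a)=0$ for all $\varphi\in\mathscr{A}'_m$ then $a=0$). Let $\mathscr{X}$ be a right $\mathscr{A}$-module which is also a normed space. Let $n\geq 2$ and let $E, F\colon \mathscr{X}^n\to\mathscr{A}$ be multi-$\mathscr{A}$-linear functions, and assume that $E$ is bounded and strong. Then the following are equivalent: (i) for all $x_1,\dots,x_n\in\mathscr{X}$, $E(x_1,\dots,x_n)=0$ implies $F(x_1,\dots,x_n)=0$; (ii) there exists $c\in\mathscr{A}$ such that $F(x_1,\dots,x_n)=cE(x_1,\dots,x_n)$ for all $x_1,\dots,x_n\in\mathscr{X}$. Moreover, each of these conditions implies that $F$ is bounded.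
   Context: A right $\mathscr{A}$-module $\mathscr{X}$ is a complex vector space with a right $\mathscr{A}$-action satisfying $(\alpha x)a=x(\alpha a)=\alpha(xa)$. A function $F\colon\mathscr{X}^n\to\mathscr{A}$ is multi-$\mathscr{A}$-linear if for all $x_1,\dots,x_n,y_j\in\mathscr{X}$, $\alpha\in\mathbb{C}$, $a\in\mathscr{A}$ and $j=1,\dots,n$: (A) $F$ is additive in the $j$-th variable; (B) $F(x_1,\dots,\alpha x_j a,\dots,x_n)=\alpha F(x_1,\dots,x_n)a$ if $j$ is even; (C) $F(x_1,\dots,\alpha x_j a,\dots,x_n)=\overline{\alpha}a^*F(x_1,\dots,x_n)$ if $j$ is odd. $F$ is bounded if there is $M$ with $\|F(x_1,\dots,x_n)\|\le M\|x_1\|\cdots\|x_n\|$ for all $x_i$. With $G_{\mathscr{A}}$ the set of invertible elements of $\mathscr{A}$, $F$ is strong if there exists $w\in\mathscr{X}$ with $F(w,w,\dots,w)\in G_{\mathscr{A}}$. *)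

theory Defs
  imports "HOL-Analysis.Analysis"
begin

definition complex_normed_space :: "(complex \<Rightarrow> 'x::real_normed_vector \<Rightarrow> 'x) \<Rightarrow> bool" where
  "complex_normed_space sc \<longleftrightarrow>
     (\<forall>r x. sc (complex_of_real r) x = scaleR r x) \<and>
     (\<forall>\<alpha> x y. sc \<alpha> (x + y) = sc \<alpha> x + sc \<alpha> y) \<and>
     (\<forall>\<alpha> \<beta> x. sc (\<alpha> + \<beta>) x = sc \<alpha> x + sc \<beta> x) \<and>
     (\<forall>\<alpha> \<beta> x. sc (\<alpha> * \<beta>) x = sc \<alpha> (sc \<beta> x)) \<and>
     (\<forall>x. sc 1 x = x) \<and>
     (\<forall>\<alpha> x. norm (sc \<alpha> x) = cmod \<alpha> * norm x)"

definition cstar_algebra ::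
  "(complex \<Rightarrow> 'a::{real_normed_algebra_1, banach} \<Rightarrow> 'a) \<Rightarrow> ('a \<Rightarrow> 'a) \<Rightarrow> bool" where
  "cstar_algebra sA st \<longleftrightarrow>
     complex_normed_space sA \<and>
     (\<forall>\<alpha> a b. sA \<alpha> (a * b) = sA \<alpha> a * b) \<and>
     (\<forall>\<alpha> a b. sA \<alpha> (a * b) = a * sA \<alpha> b) \<and>
     (\<forall>a. st (st a) = a) \<and>
     (\<forall>a b. st (a + b) = st a + st b) \<and>
     (\<forall>\<alpha> a. st (sA \<alpha> a) = sA (cnj \<alpha>) (st a)) \<and>
     (\<forall>a b. st (a * b) = st b * st a) \<and>
     (\<forall>a. norm (st a * a) = norm a ^ 2)"

definition lin_mult_functional ::
  "(complex \<Rightarrow> 'a::real_normed_algebra_1 \<Rightarrow> 'a) \<Rightarrow> ('a \<Rightarrow> complex) \<Rightarrow> bool" where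
  "lin_mult_functional sA \<phi> \<longleftrightarrow>
     (\<forall>a b. \<phi> (a + b) = \<phi> a + \<phi> b) \<and>
     (\<forall>\<alpha> a. \<phi> (sA \<alpha> a) = \<alpha> * \<phi> a) \<and>
     (\<forall>a b. \<phi> (a * b) = \<phi> a * \<phi> b)"

definition mult_functionals_total :: "(complex \<Rightarrow> 'a::real_normed_algebra_1 \<Rightarrow> 'a) \<Rightarrow> bool" where
  "mult_functionals_total sA \<longleftrightarrow>
     (\<forall>a. (\<forall>\<phi>. lin_mult_functional sA \<phi> \<longrightarrow> \<phi> a = 0) \<longrightarrow> a = 0)"

definition right_module ::
  "(complex \<Rightarrow> 'a::real_normed_algebra_1 \<Rightarrow> 'a) \<Rightarrow> (complex \<Rightarrow> 'x::real_normed_vector \<Rightarrow> 'x)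
    \<Rightarrow> ('x \<Rightarrow> 'a \<Rightarrow> 'x) \<Rightarrow> bool" where
  "right_module sA sX act \<longleftrightarrow>
     (\<forall>x y a. act (x + y) a = act x a + act y a) \<and>
     (\<forall>x a b. act x (a + b) = act x a + act x b) \<and>
     (\<forall>x a b. act x (a * b) = act (act x a) b) \<and>
     (\<forall>\<alpha> x a. act (sX \<alpha> x) a = act x (sA \<alpha> a)) \<and>
     (\<forall>\<alpha> x a. act x (sA \<alpha> a) = sX \<alpha> (act x a))"

text \<open>Multi-A-linear functions X^n \<rightarrow> A, with X^n represented by lists of length n.
  List index i (0-based) corresponds to the variable j = i + 1 of the paper.\<close>
definition multi_A_linear ::
  "(complex \<Rightarrow> 'a::real_normed_algebra_1 \<Rightarrow> 'a) \<Rightarrow> ('a \<Rightarrow> 'a) \<Rightarrow> (complex \<Rightarrow> 'x \<Rightarrow> 'x)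
    \<Rightarrow> ('x::real_normed_vector \<Rightarrow> 'a \<Rightarrow> 'x) \<Rightarrow> nat \<Rightarrow> ('x list \<Rightarrow> 'a) \<Rightarrow> bool" where
  "multi_A_linear sA st sX act n F \<longleftrightarrow>
     (\<forall>xs. length xs = n \<longrightarrow> (\<forall>i < n.
        (\<forall>y. F (xs[i := xs ! i + y]) = F xs + F (xs[i := y])) \<and>
        (\<forall>\<alpha> a. F (xs[i := act (sX \<alpha> (xs ! i)) a]) =
           (if even (i + 1) then sA \<alpha> (F xs * a)
            else sA (cnj \<alpha>) (st a * F xs)))))"

definition bounded_multi :: "nat \<Rightarrow> ('x::real_normed_vector list \<Rightarrow> 'a::real_normed_vector) \<Rightarrow> bool" where
  "bounded_multi n F \<longleftrightarrow>
     (\<exists>M. \<forall>xs. length xs = n \<longrightarrow> norm (F xs) \<le> M * prod_list (map norm xs))"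

definition invertible_elems :: "'a::ring_1 set" where
  "invertible_elems = {a. \<exists>b. a * b = 1 \<and> b * a = 1}"

definition strong_multi :: "nat \<Rightarrow> ('x list \<Rightarrow> 'a::ring_1) \<Rightarrow> bool" where
  "strong_multi n F \<longleftrightarrow> (\<exists>w. F (replicate n w) \<in> invertible_elems)"

end

theory Submission
  imports Defs
begin


lemma neumann:
  fixes x :: "'a::{real_normed_algebra_1,banach}"
  assumes "norm x < 1"
  shows "\<exists>y. (1 - x) * y = 1 \<and> y * (1 - x) = 1"
proof -
  have s: "summable (\<lambda>n. x ^ n)" using complete_algebra_summable_geometric[OF assms] .
  let ?y = "suminf (\<lambda>n. x ^ n)"
  have t: "(\<lambda>n. x ^ n - x ^ Suc n) sums (x ^ 0 - 0)"
    using telescope_sums'[OF LIMSEQ_power_zero[OF assms]] by simp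
  have "(\<lambda>n. (1 - x) * x ^ n) sums ((1 - x) * ?y)"
    using sums_mult[OF summable_sums[OF s]] .
  moreover have "(\<lambda>n. (1 - x) * x ^ n) = (\<lambda>n. x ^ n - x ^ Suc n)"
    by (simp add: algebra_simps)
  ultimately have 1: "(1 - x) * ?y = 1" using t sums_unique2 by fastforce
  have "(\<lambda>n. x ^ n * (1 - x)) sums (?y * (1 - x))"
    using sums_mult2[OF summable_sums[OF s]] .
  moreover have "(\<lambda>n. x ^ n * (1 - x)) = (\<lambda>n. x ^ n - x ^ Suc n)"
    by (simp add: algebra_simps power_commutes)
  ultimately have 2: "?y * (1 - x) = 1" using t sums_unique2 by fastforce
  show ?thesis using 1 2 by blast
qed

lemma inv_near:
  fixes a e g :: "'a::{real_normed_algebra_1,banach}"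
  assumes eg: "e * g = 1" "g * e = 1" and small: "norm (a - e) * norm g < 1"
  shows "a \<in> invertible_elems"
proof -
  define x where "x = g * (e - a)"
  have "norm x \<le> norm g * norm (e - a)" unfolding x_def by (rule norm_mult_ineq)
  also have "norm (e - a) = norm (a - e)" by (rule norm_minus_commute)
  finally have "norm x < 1" using small by (simp add: mult.commute)
  then obtain y where y: "(1 - x) * y = 1" "y * (1 - x) = 1" using neumann by blast
  have ax: "a = e * (1 - x)" unfolding x_def
    by (simp add: algebra_simps mult.assoc[symmetric] eg)
  have "a * (y * g) = 1" unfolding ax
    by (metis eg(1) mult.assoc mult_1_left y(1))
  moreover have "(y * g) * a = 1" unfolding ax
    by (metis eg(2) mult.assoc mult_1_left y(2))
  ultimately show ?thesis unfolding invertible_elems_def by blast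
qed

lemma comm_from_total:
  fixes sA :: "complex \<Rightarrow> 'a::real_normed_algebra_1 \<Rightarrow> 'a" and a b :: 'a
  assumes "mult_functionals_total sA"
  shows "a * b = b * a"
proof -
  have "\<forall>\<phi>. lin_mult_functional sA \<phi> \<longrightarrow> \<phi> (a * b - b * a) = 0"
  proof (intro allI impI)
    fix \<phi> assume "lin_mult_functional sA \<phi>"
    then have ad: "\<And>u v. \<phi> (u + v) = \<phi> u + \<phi> v" and mu: "\<And>u v. \<phi> (u * v) = \<phi> u * \<phi> v"
      unfolding lin_mult_functional_def by auto
    have "\<phi> (a * b) = \<phi> (a * b - b * a) + \<phi> (b * a)" using ad[of "a * b - b * a" "b * a"] by simp
    then show "\<phi> (a * b - b * a) = 0" using mu by simp
  qed
  then have "a * b - b * a = 0" using assms unfolding mult_functionals_total_def by blast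
  then show ?thesis by simp
qed

lemma st_one:
  assumes "cstar_algebra sA st"
  shows "st 1 = 1"
proof -
  have i: "\<And>a. st (st a) = a" and m: "\<And>a b. st (a * b) = st b * st a"
    using assms unfolding cstar_algebra_def by auto
  have "st 1 = st 1 * st (st 1)" using i by simp
  also have "\<dots> = st (st 1 * 1)" using m by metis
  also have "\<dots> = 1" using i by simp
  finally show ?thesis .
qed

lemma ml_add:
  assumes "multi_A_linear sA st sX act n F" "length xs = n" "i < n"
  shows "F (xs[i := p + q]) = F (xs[i := p]) + F (xs[i := q])"
proof -
  have "length (xs[i := p]) = n" using assms by simp
  then have "F ((xs[i := p])[i := (xs[i := p]) ! i + q]) = F (xs[i := p]) + F ((xs[i := p])[i := q])"
    using assms unfolding multi_A_linear_def by blast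
  then show ?thesis using assms by simp
qed

lemma ml_diff:
  fixes F :: "'x::real_normed_vector list \<Rightarrow> 'a::real_normed_algebra_1"
  assumes "multi_A_linear sA st sX act n F" "length xs = n" "i < n"
  shows "F (xs[i := p - q]) = F (xs[i := p]) - F (xs[i := q])"
  using ml_add[OF assms, of "p - q" q] by simp

lemma ml_act:
  fixes F :: "'x::real_normed_vector list \<Rightarrow> 'a::real_normed_algebra_1"
  assumes "multi_A_linear sA st sX act n F" "length xs = n" "i < n"
    and "complex_normed_space sA" "complex_normed_space sX"
  shows "F (xs[i := act (xs ! i) a]) = (if even (i + 1) then F xs * a else st a * F xs)"
proof -
  have "F (xs[i := act (sX 1 (xs ! i)) a]) =
           (if even (i + 1) then sA 1 (F xs * a) else sA (cnj 1) (st a * F xs))"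
    using assms(1-3) unfolding multi_A_linear_def by blast
  moreover have "sX 1 (xs ! i) = xs ! i" using assms(5) unfolding complex_normed_space_def by blast
  moreover have "\<And>z. sA 1 z = z" using assms(4) unfolding complex_normed_space_def by blast
  ultimately show ?thesis by simp
qed

lemma ml_scale:
  fixes F :: "'x::real_normed_vector list \<Rightarrow> 'a::real_normed_algebra_1"
  assumes "multi_A_linear sA st sX act n F" "length xs = n" "i < n"
    and "complex_normed_space sA" "complex_normed_space sX" "st 1 = 1"
  shows "F (xs[i := scaleR t (xs ! i)]) = scaleR t (F xs)"
proof -
  let ?ys = "xs[i := scaleR t (xs ! i)]"
  have ly: "length ?ys = n" using assms by simp
  have 1: "F (?ys[i := act (?ys ! i) 1]) = F ?ys"
    using ml_act[OF assms(1) ly assms(3-5), of 1] assms(6) by simp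
  have 2: "?ys ! i = sX (complex_of_real t) (xs ! i)"
    using assms(2,3,5) unfolding complex_normed_space_def by simp
  have 3: "F (xs[i := act (sX (complex_of_real t) (xs ! i)) 1]) =
           (if even (i + 1) then sA (complex_of_real t) (F xs * 1)
            else sA (cnj (complex_of_real t)) (st 1 * F xs))"
    using assms(1-3) unfolding multi_A_linear_def by blast
  have 4: "\<And>z. sA (complex_of_real t) z = scaleR t z"
    using assms(4) unfolding complex_normed_space_def by blast
  have 5: "F (xs[i := act (sX (complex_of_real t) (xs ! i)) 1]) = scaleR t (F xs)"
    using 3 4 assms(6) by (cases "even (i + 1)") simp_all
  have "F ?ys = F (xs[i := act (sX (complex_of_real t) (xs ! i)) 1])"
    using 1 2 by simp
  then show ?thesis using 5 by simp
qed

lemma prod_bound: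
  fixes zs :: "'x::real_normed_vector list"
  assumes "k < length zs" "\<forall>i<length zs. i \<noteq> k \<longrightarrow> norm (zs ! i) \<le> R"
    "norm (zs ! k) \<le> d" "0 \<le> R"
  shows "prod_list (map norm zs) \<le> d * R ^ (length zs - 1)"
  using assms
proof (induction zs arbitrary: k)
  case Nil then show ?case by simp
next
  case (Cons z zs)
  show ?case
  proof (cases k)
    case 0
    have "\<forall>i<length zs. norm (zs ! i) \<le> R" using Cons.prems(2) 0 by auto
    then have "prod_list (map norm zs) \<le> R ^ length zs"
    proof (induction zs)
      case Nil then show ?case by simp
    next
      case (Cons a as)
      have "norm a \<le> R" using Cons.prems by force
      moreover have "prod_list (map norm as) \<le> R ^ length as" using Cons by force
      moreover have "0 \<le> prod_list (map norm as)" by (induction as) auto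
      ultimately show ?case by (simp add: mult_mono assms(4))
    qed
    moreover have "norm z \<le> d" using Cons.prems(3) 0 by simp
    moreover have "0 \<le> prod_list (map norm zs)" by (induction zs) auto
    ultimately show ?thesis using 0 by (simp add: mult_mono')
  next
    case (Suc k')
    then have k': "k' < length zs" using Cons.prems(1) by simp
    have IH: "prod_list (map norm zs) \<le> d * R ^ (length zs - 1)"
      using Cons.IH[of k'] Cons.prems Suc by force
    have "norm z \<le> R" using Cons.prems(2) Suc by force
    moreover have "0 \<le> prod_list (map norm zs)" by (induction zs) auto
    ultimately have "norm z * prod_list (map norm zs) \<le> R * (d * R ^ (length zs - 1))"
      using IH Cons.prems(4) by (simp add: mult_mono)
    also have "\<dots> = d * R ^ (length (z # zs) - 1)" using k'
      by (cases "length zs") (auto simp: algebra_simps)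
    finally show ?thesis by simp
  qed
qed


theorem theorem3p6:
  fixes sA :: "complex \<Rightarrow> 'a::{real_normed_algebra_1, banach} \<Rightarrow> 'a"
    and st :: "'a \<Rightarrow> 'a"
    and sX :: "complex \<Rightarrow> 'x::real_normed_vector \<Rightarrow> 'x"
    and act :: "'x \<Rightarrow> 'a \<Rightarrow> 'x"
    and n :: nat
    and E F :: "'x list \<Rightarrow> 'a"
  assumes "cstar_algebra sA st"
    and "mult_functionals_total sA"
    and "complex_normed_space sX"
    and "right_module sA sX act"
    and "n \<ge> 2"
    and "multi_A_linear sA st sX act n E"
    and "multi_A_linear sA st sX act n F"
    and "bounded_multi n E"
    and "strong_multi n E"
  shows "((\<forall>xs. length xs = n \<longrightarrow> E xs = 0 \<longrightarrow> F xs = 0) \<longleftrightarrow>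
          (\<exists>c. \<forall>xs. length xs = n \<longrightarrow> F xs = c * E xs))
       \<and> ((\<forall>xs. length xs = n \<longrightarrow> E xs = 0 \<longrightarrow> F xs = 0) \<longrightarrow> bounded_multi n F)
       \<and> ((\<exists>c. \<forall>xs. length xs = n \<longrightarrow> F xs = c * E xs) \<longrightarrow> bounded_multi n F)"
proof -
  have csA: "complex_normed_space sA" using assms(1) unfolding cstar_algebra_def by blast
  have csX: "complex_normed_space sX" by fact
  have st1: "st 1 = 1" using st_one[OF assms(1)] .
  have stst: "\<And>a. st (st a) = a" using assms(1) unfolding cstar_algebra_def by blast
  have comm: "\<And>a b :: 'a. a * b = b * a" using comm_from_total[OF assms(2)] by blast
  obtain M where M: "\<And>xs. length xs = n \<Longrightarrow> norm (E xs) \<le> M * prod_list (map norm xs)"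
    using assms(8) unfolding bounded_multi_def by blast
  define M' where "M' = \<bar>M\<bar> + 1"
  have M'pos: "M' > 0" unfolding M'_def by simp
  have M': "norm (E xs) \<le> M' * prod_list (map norm xs)" if "length xs = n" for xs
  proof -
    have "0 \<le> prod_list (map norm xs)" by (induction xs) auto
    then have "M * prod_list (map norm xs) \<le> M' * prod_list (map norm xs)"
      unfolding M'_def by (intro mult_right_mono) auto
    then show ?thesis using M[OF that] by linarith
  qed
  have B2: "bounded_multi n F" if "\<forall>xs. length xs = n \<longrightarrow> F xs = c * E xs" for c
  proof -
    have "norm (F xs) \<le> (norm c * M') * prod_list (map norm xs)" if "length xs = n" for xs
    proof -
      have "norm (F xs) \<le> norm c * norm (E xs)"
        using \<open>\<forall>xs. length xs = n \<longrightarrow> F xs = c * E xs\<close> that by (simp add: norm_mult_ineq)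
      also have "\<dots> \<le> norm c * (M' * prod_list (map norm xs))"
        using M'[OF that] by (simp add: mult_left_mono)
      finally show ?thesis by (simp add: mult.assoc)
    qed
    then show ?thesis unfolding bounded_multi_def by blast
  qed
  have I2: "\<exists>c. \<forall>xs. length xs = n \<longrightarrow> F xs = c * E xs"
    if H: "\<forall>xs. length xs = n \<longrightarrow> E xs = 0 \<longrightarrow> F xs = 0"
  proof -
    obtain w where "E (replicate n w) \<in> invertible_elems"
      using assms(9) unfolding strong_multi_def by blast
    then obtain g where eg: "E (replicate n w) * g = 1" "g * E (replicate n w) = 1"
      unfolding invertible_elems_def by blast
    define e where "e = E (replicate n w)"
    define c where "c = F (replicate n w) * g"
    have Fw: "F (replicate n w) = c * e"
      unfolding c_def e_def by (simp add: mult.assoc eg(2))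
    have L: "F (ys[i := x]) = c * E (ys[i := x])"
      if ly: "length ys = n" and i: "i < n" and inv: "E ys \<in> invertible_elems"
        and Fy: "F ys = c * E ys" for ys i x
    proof -
      obtain h where h: "E ys * h = 1" "h * E ys = 1"
        using inv unfolding invertible_elems_def by blast
      define u where "u = ys ! i"
      define b where "b = (if even (i + 1) then h * E (ys[i := x]) else st (E (ys[i := x]) * h))"
      define q where "q = act u b"
      have Eq: "E (ys[i := q]) = E (ys[i := x])"
      proof (cases "even (i + 1)")
        case True
        then have "E (ys[i := q]) = E ys * b"
          using ml_act[OF assms(6) ly i csA csX, of b] unfolding q_def u_def by simp
        then show ?thesis using True unfolding b_def by (simp add: mult.assoc[symmetric] h)
      next
        case False
        then have "E (ys[i := q]) = st b * E ys"
          using ml_act[OF assms(6) ly i csA csX, of b] unfolding q_def u_def by simp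
        then show ?thesis using False unfolding b_def by (simp add: stst mult.assoc h)
      qed
      have "E (ys[i := x - q]) = 0" using ml_diff[OF assms(6) ly i] Eq by simp
      then have "F (ys[i := x - q]) = 0" using H ly by simp
      then have Fxq: "F (ys[i := x]) = F (ys[i := q])" using ml_diff[OF assms(7) ly i, of x q] by simp
      show ?thesis
      proof (cases "even (i + 1)")
        case True
        then have "F (ys[i := q]) = F ys * b"
          using ml_act[OF assms(7) ly i csA csX, of b] unfolding q_def u_def by simp
        then have "F (ys[i := x]) = c * (E ys * h) * E (ys[i := x])"
          using True Fxq Fy unfolding b_def by (simp add: mult.assoc)
        then show ?thesis using h by simp
      next
        case False
        then have "F (ys[i := q]) = st b * F ys"
          using ml_act[OF assms(7) ly i csA csX, of b] unfolding q_def u_def by simp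
        then have "F (ys[i := x]) = E (ys[i := x]) * h * (c * E ys)"
          using False Fxq Fy unfolding b_def by (simp add: stst)
        also have "\<dots> = c * E (ys[i := x]) * (h * E ys)" by (metis comm mult.assoc)
        finally show ?thesis using h by simp
      qed
    qed
    define R where "R = norm w + 1"
    have Rpos: "R \<ge> 1" unfolding R_def by simp
    define K where "K = real n * M' * R ^ (n - 1) * (norm g + 1)"
    have Kpos: "K > 0"
    proof -
      have "real n > 0" using assms(5) by simp
      moreover have "R ^ (n - 1) > 0" using Rpos by simp
      moreover have "norm g + 1 > 0" by (simp add: add_nonneg_pos)
      ultimately show ?thesis unfolding K_def using M'pos by (intro mult_pos_pos) auto
    qed
    define d where "d = min 1 (1 / (2 * K))"
    have dpos: "d > 0" unfolding d_def using Kpos by simp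
    have d1: "d \<le> 1" unfolding d_def by simp
    have dK: "d * K \<le> 1 / 2"
    proof -
      have "d \<le> 1 / (2 * K)" unfolding d_def by simp
      then have "d * K \<le> 1 / (2 * K) * K" using Kpos by (intro mult_right_mono) auto
      also have "\<dots> = 1 / 2" using Kpos by simp
      finally show ?thesis .
    qed
    define N where "N = {u. norm (u - w) \<le> d}"
    have wN: "w \<in> N" unfolding N_def using dpos by simp
    have NR: "norm u \<le> R" if "u \<in> N" for u
    proof -
      have "norm u \<le> norm (u - w) + norm w" by (metis norm_triangle_ineq4 diff_add_cancel norm_triangle_ineq)
      then show ?thesis using that d1 unfolding N_def R_def by simp
    qed
    have Tp: "\<forall>xs. length xs = n \<longrightarrow> (\<forall>i<n. (i < k \<longrightarrow> xs ! i \<in> N) \<and> (k \<le> i \<longrightarrow> xs ! i = w))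
              \<longrightarrow> norm (E xs - e) \<le> real k * M' * d * R ^ (n - 1)" if "k \<le> n" for k
      using that
    proof (induction k)
      case 0
      show ?case
      proof (intro allI impI)
        fix xs :: "'x list" assume "length xs = n" and
          "\<forall>i<n. (i < 0 \<longrightarrow> xs ! i \<in> N) \<and> (0 \<le> i \<longrightarrow> xs ! i = w)"
        then have "xs = replicate n w" by (intro nth_equalityI) auto
        then show "norm (E xs - e) \<le> real 0 * M' * d * R ^ (n - 1)" unfolding e_def by simp
      qed
    next
      case (Suc k)
      show ?case
      proof (intro allI impI)
        fix xs :: "'x list" assume lx: "length xs = n" and
          hx: "\<forall>i<n. (i < Suc k \<longrightarrow> xs ! i \<in> N) \<and> (Suc k \<le> i \<longrightarrow> xs ! i = w)"
        have kn: "k < n" using Suc.prems by simp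
        let ?ys = "xs[k := w]"
        have ly: "length ?ys = n" using lx by simp
        have hy: "\<forall>i<n. (i < k \<longrightarrow> ?ys ! i \<in> N) \<and> (k \<le> i \<longrightarrow> ?ys ! i = w)"
          using hx lx by (auto simp: nth_list_update)
        have IH: "norm (E ?ys - e) \<le> real k * M' * d * R ^ (n - 1)"
          using Suc.IH Suc.prems ly hy by simp
        have "E (xs[k := xs ! k - w]) = E (xs[k := xs ! k]) - E ?ys"
          using ml_diff[OF assms(6) lx kn] .
        then have dif: "E xs - E ?ys = E (xs[k := xs ! k - w])" by simp
        let ?zs = "xs[k := xs ! k - w]"
        have "prod_list (map norm ?zs) \<le> d * R ^ (length ?zs - 1)"
        proof (rule prod_bound[of k])
          show "k < length ?zs" using lx kn by simp
          show "\<forall>i<length ?zs. i \<noteq> k \<longrightarrow> norm (?zs ! i) \<le> R"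
          proof (intro allI impI)
            fix i assume "i < length ?zs" "i \<noteq> k"
            then have "xs ! i \<in> N" using hx lx wN by (cases "i < Suc k") auto
            then show "norm (?zs ! i) \<le> R" using NR \<open>i \<noteq> k\<close> by simp
          qed
          show "norm (?zs ! k) \<le> d" using hx lx kn unfolding N_def by simp
          show "0 \<le> R" using Rpos by simp
        qed
        then have "norm (E xs - E ?ys) \<le> M' * (d * R ^ (n - 1))"
          using M'[of ?zs] lx dif M'pos
          by (smt (verit, best) length_list_update mult_left_mono)
        then have "norm (E xs - e) \<le> norm (E xs - E ?ys) + norm (E ?ys - e)"
          using norm_triangle_ineq[of "E xs - E ?ys" "E ?ys - e"] by simp
        then show "norm (E xs - e) \<le> real (Suc k) * M' * d * R ^ (n - 1)"
          using IH \<open>norm (E xs - E ?ys) \<le> M' * (d * R ^ (n - 1))\<close>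
          by (simp add: algebra_simps)
      qed
    qed
    have invN: "E xs \<in> invertible_elems" if "length xs = n" "\<forall>i<n. xs ! i \<in> N" for xs
    proof (rule inv_near[OF eg])
      have "norm (E xs - e) \<le> real n * M' * d * R ^ (n - 1)"
        using Tp[of n] that by simp
      then have "norm (E xs - e) * norm g \<le> real n * M' * d * R ^ (n - 1) * (norm g + 1)"
        by (intro mult_mono) (auto intro: order_trans[OF norm_ge_zero])
      also have "\<dots> = d * K" unfolding K_def by (simp add: algebra_simps)
      finally show "norm (E xs - E (replicate n w)) * norm g < 1" using dK unfolding e_def by simp
    qed
    have T: "\<forall>xs. length xs = n \<longrightarrow> (\<forall>i<n. (i < k \<longrightarrow> xs ! i \<in> N) \<and> (k \<le> i \<longrightarrow> xs ! i = w))
              \<longrightarrow> F xs = c * E xs" if "k \<le> n" for k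
      using that
    proof (induction k)
      case 0
      show ?case
      proof (intro allI impI)
        fix xs :: "'x list" assume "length xs = n" and
          "\<forall>i<n. (i < 0 \<longrightarrow> xs ! i \<in> N) \<and> (0 \<le> i \<longrightarrow> xs ! i = w)"
        then have "xs = replicate n w" by (intro nth_equalityI) auto
        then show "F xs = c * E xs" using Fw unfolding e_def by simp
      qed
    next
      case (Suc k)
      show ?case
      proof (intro allI impI)
        fix xs :: "'x list" assume lx: "length xs = n" and
          hx: "\<forall>i<n. (i < Suc k \<longrightarrow> xs ! i \<in> N) \<and> (Suc k \<le> i \<longrightarrow> xs ! i = w)"
        have kn: "k < n" using Suc.prems by simp
        let ?ys = "xs[k := w]"
        have ly: "length ?ys = n" using lx by simp
        have hy: "\<forall>i<n. (i < k \<longrightarrow> ?ys ! i \<in> N) \<and> (k \<le> i \<longrightarrow> ?ys ! i = w)"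
          using hx lx by (auto simp: nth_list_update)
        have Fy: "F ?ys = c * E ?ys" using Suc.IH Suc.prems ly hy by simp
        have "\<forall>i<n. ?ys ! i \<in> N" using hy wN by (metis not_le)
        then have "E ?ys \<in> invertible_elems" using invN ly by blast
        then have "F (?ys[k := xs ! k]) = c * E (?ys[k := xs ! k])" using L ly kn Fy by blast
        then show "F xs = c * E xs" by simp
      qed
    qed
    have S: "\<forall>xs. length xs = n \<longrightarrow> (\<forall>i<n. k \<le> i \<longrightarrow> xs ! i \<in> N) \<longrightarrow> F xs = c * E xs"
      if "k \<le> n" for k
      using that
    proof (induction k)
      case 0
      then show ?case using T[of n] by simp
    next
      case (Suc k)
      show ?case
      proof (intro allI impI)
        fix xs :: "'x list" assume lx: "length xs = n" and hx: "\<forall>i<n. Suc k \<le> i \<longrightarrow> xs ! i \<in> N"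
        have kn: "k < n" using Suc.prems by simp
        have IH: "\<And>ys. length ys = n \<Longrightarrow> (\<forall>i<n. k \<le> i \<longrightarrow> ys ! i \<in> N) \<Longrightarrow> F ys = c * E ys"
          using Suc.IH Suc.prems by simp
        define x where "x = xs ! k"
        define t where "t = d / (norm x + 1)"
        have tpos: "t > 0" unfolding t_def using dpos by (simp add: add_nonneg_pos)
        define z where "z = scaleR t x"
        have nz: "norm z \<le> d"
        proof -
          have "norm z = d * (norm x / (norm x + 1))" unfolding z_def t_def using dpos
            by (simp add: abs_of_nonneg add_nonneg_pos)
          also have "\<dots> \<le> d * 1" using dpos
            by (intro mult_left_mono) (auto simp: divide_le_eq_1 add_nonneg_pos)
          finally show ?thesis by simp
        qed
        have h1: "\<forall>i<n. k \<le> i \<longrightarrow> xs[k := w + z] ! i \<in> N"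
          using hx nz lx unfolding N_def by (auto simp: nth_list_update)
        have h2: "\<forall>i<n. k \<le> i \<longrightarrow> xs[k := w] ! i \<in> N"
          using hx wN lx unfolding N_def by (auto simp: nth_list_update)
        have "F (xs[k := (w + z) - w]) = F (xs[k := w + z]) - F (xs[k := w])"
          using ml_diff[OF assms(7) lx kn] .
        also have "\<dots> = c * E (xs[k := w + z]) - c * E (xs[k := w])"
          using IH h1 h2 lx by simp
        also have "\<dots> = c * E (xs[k := (w + z) - w])"
          using ml_diff[OF assms(6) lx kn, of "w + z" w] by (simp add: right_diff_distrib)
        finally have "F (xs[k := z]) = c * E (xs[k := z])" by simp
        moreover have "F (xs[k := z]) = scaleR t (F xs)"
          unfolding z_def x_def using ml_scale[OF assms(7) lx kn csA csX st1] .
        moreover have "E (xs[k := z]) = scaleR t (E xs)"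
          unfolding z_def x_def using ml_scale[OF assms(6) lx kn csA csX st1] .
        ultimately have "scaleR t (F xs) = scaleR t (c * E xs)" by simp
        then show "F xs = c * E xs" using tpos by simp
      qed
    qed
    have "\<forall>xs. length xs = n \<longrightarrow> F xs = c * E xs" using S[of n] by simp
    then show ?thesis by blast
  qed
  have I1: "\<forall>xs. length xs = n \<longrightarrow> E xs = 0 \<longrightarrow> F xs = 0"
    if "\<exists>c. \<forall>xs. length xs = n \<longrightarrow> F xs = c * E xs"
    using that by fastforce
  show ?thesis using I1 I2 B2 by blast
qed

end
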